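(* Let $\phi$ be a reduced Boolean formula in the variables $x_1,\dots,x_n$ defining a set $S \subseteq \{0,1\}^n$ and let $Q \subseteq [0,1]^n$ be any convex set containing $S$. Then $\phi^n(Q) = \operatorname{conv}(S)$.
   Context: Boolean formulas are built from input variables $x_1,\dots,x_n$ using $\wedge$, $\vee$, $\neg$, interpreted as functions $\{0,1\}^n\to\{0,1\}$; $\phi$ defines $S=\{x\in\{0,1\}^n:\phi(x)=1\}$. A formula is reduced if negations apply only to input variables. For a reduced $\phi$ and convex $Q\subseteq[0,1]^n$, $\phi(Q)$ is defined recursively: $x_i$ is replaced by $\{x \in Q : x_i = 1\}$; $\neg x_i$ by $\{x \in Q : x_i = 0\}$; a conjunction by the intersection of the corresponding sets; a disjunction by the convex hull of the union of the corresponding sets. Iterates: $\phi^1(Q):=\phi(Q)$ and $\phi^{\ell+1}(Q):=\phi(\phi^\ell(Q))$ for $\ell\ge1$. *)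

theory Defs
  imports "HOL-Analysis.Analysis"
begin

text \<open>Reduced Boolean formulas over input variables indexed by the finite type 'n
  (so the variables are x_i for i in 'n, and n = CARD('n)): negation is applied
  only to input variables.\<close>
datatype 'n rformula =
    RVar 'n
  | RNeg 'n
  | RAnd "'n rformula" "'n rformula"
  | ROr "'n rformula" "'n rformula"

fun rf_eval :: "'n rformula \<Rightarrow> (real ^ 'n) \<Rightarrow> bool" where
  "rf_eval (RVar i) x = (x $ i = 1)"
| "rf_eval (RNeg i) x = (\<not> (x $ i = 1))"
| "rf_eval (RAnd a b) x = (rf_eval a x \<and> rf_eval b x)"
| "rf_eval (ROr a b) x = (rf_eval a x \<or> rf_eval b x)"

definition bin_cube :: "(real ^ 'n) set" where
  "bin_cube = {x. \<forall>i. x $ i = 0 \<or> x $ i = 1}"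

definition rf_set :: "'n rformula \<Rightarrow> (real ^ 'n) set" where
  "rf_set \<phi> = {x \<in> bin_cube. rf_eval \<phi> x}"

definition unit_cube :: "(real ^ 'n) set" where
  "unit_cube = {x. \<forall>i. 0 \<le> x $ i \<and> x $ i \<le> 1}"

fun rf_apply :: "'n rformula \<Rightarrow> (real ^ 'n) set \<Rightarrow> (real ^ 'n) set" where
  "rf_apply (RVar i) Q = {x \<in> Q. x $ i = 1}"
| "rf_apply (RNeg i) Q = {x \<in> Q. x $ i = 0}"
| "rf_apply (RAnd a b) Q = rf_apply a Q \<inter> rf_apply b Q"
| "rf_apply (ROr a b) Q = convex hull (rf_apply a Q \<union> rf_apply b Q)"

definition rf_iter :: "'n rformula \<Rightarrow> nat \<Rightarrow> (real ^ 'n) set \<Rightarrow> (real ^ 'n) set" where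
  "rf_iter \<phi> l Q = (rf_apply \<phi> ^^ l) Q"

end

theory Submission
  imports Defs
begin

lemma apply_sub: "convex P \<Longrightarrow> rf_apply \<psi> P \<subseteq> P"
proof (induction \<psi>)
  case (ROr a b) then show ?case by (simp add: hull_minimal)
qed auto

lemma convex_coord: "convex {x::real^'n. x $ i = c}"
proof (rule convexI)
  fix x y :: "real^'n" and u v :: real
  assume "x \<in> {x. x $ i = c}" "y \<in> {x. x $ i = c}" "0 \<le> u" "0 \<le> v" "u + v = 1"
  then have "u * c + v * c = c" "x $ i = c" "y $ i = c" by (auto simp flip: distrib_right)
  then show "u *\<^sub>R x + v *\<^sub>R y \<in> {x. x $ i = c}" by simp
qed

lemma apply_convex: "convex P \<Longrightarrow> convex (rf_apply \<psi> P)"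
proof (induction \<psi>)
  case (RVar i)
  have "{x \<in> P. x $ i = 1} = P \<inter> {x. x $ i = 1}" by auto
  moreover have "convex (P \<inter> {x. x $ i = 1})" by (rule convex_Int[OF RVar convex_coord])
  ultimately show ?case by simp
next
  case (RNeg i)
  have "{x \<in> P. x $ i = 0} = P \<inter> {x. x $ i = 0}" by auto
  moreover have "convex (P \<inter> {x. x $ i = 0})" by (rule convex_Int[OF RNeg convex_coord])
  ultimately show ?case by simp
next
  case (RAnd a b) then show ?case by (simp add: convex_Int)
next
  case (ROr a b) then show ?case by simp
qed

lemma apply_sup: "rf_set \<psi> \<inter> P \<subseteq> rf_apply \<psi> P"
proof (induction \<psi>)
  case (RNeg i)
  then show ?case by (auto simp: rf_set_def bin_cube_def)
next
  case (ROr a b)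
  have "rf_set (ROr a b) \<inter> P \<subseteq> rf_apply a P \<union> rf_apply b P"
    using ROr by (auto simp: rf_set_def)
  also have "\<dots> \<subseteq> convex hull (rf_apply a P \<union> rf_apply b P)" by (rule hull_subset)
  finally show ?case by simp
qed (auto simp: rf_set_def)

lemma iter_props:
  assumes "convex Q" "Q \<subseteq> unit_cube" "rf_set \<phi> \<subseteq> Q"
  shows "convex (rf_iter \<phi> l Q) \<and> rf_iter \<phi> l Q \<subseteq> unit_cube \<and> rf_set \<phi> \<subseteq> rf_iter \<phi> l Q"
proof (induction l)
  case 0 then show ?case using assms by (simp add: rf_iter_def)
next
  case (Suc l)
  have e: "rf_iter \<phi> (Suc l) Q = rf_apply \<phi> (rf_iter \<phi> l Q)" by (simp add: rf_iter_def)
  have c: "convex (rf_iter \<phi> l Q)" and u: "rf_iter \<phi> l Q \<subseteq> unit_cube"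
    and r: "rf_set \<phi> \<subseteq> rf_iter \<phi> l Q" using Suc by auto
  have 1: "convex (rf_apply \<phi> (rf_iter \<phi> l Q))" by (rule apply_convex[OF c])
  have 2: "rf_apply \<phi> (rf_iter \<phi> l Q) \<subseteq> unit_cube" using apply_sub[OF c] u by (rule order_trans)
  have "rf_set \<phi> = rf_set \<phi> \<inter> rf_iter \<phi> l Q" using r by (rule Int_absorb2[symmetric])
  also have "\<dots> \<subseteq> rf_apply \<phi> (rf_iter \<phi> l Q)" by (rule apply_sup)
  finally show ?case unfolding e using 1 2 by simp
qed


definition face :: "'n set \<Rightarrow> real^'n \<Rightarrow> (real^'n) set" where
  "face J a = {x \<in> unit_cube. \<forall>j\<in>J. x $ j = a $ j}"

definition upd :: "real^'n \<Rightarrow> 'n \<Rightarrow> real \<Rightarrow> real^'n" where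
  "upd a i v = (\<chi> k. if k = i then v else a $ k)"

lemma upd_comp[simp]: "upd a i v $ k = (if k = i then v else a $ k)"
  by (simp add: upd_def)

lemma upd_bin: "a \<in> bin_cube \<Longrightarrow> v = 0 \<or> v = 1 \<Longrightarrow> upd a i v \<in> bin_cube"
  by (auto simp: bin_cube_def)

lemma bin_unit: "bin_cube \<subseteq> unit_cube"
proof
  fix x :: "real^'n" assume "x \<in> bin_cube"
  then have "x $ i = 0 \<or> x $ i = 1" for i by (auto simp: bin_cube_def)
  then have "0 \<le> x $ i \<and> x $ i \<le> 1" for i by (metis order_refl zero_le_one)
  then show "x \<in> unit_cube" by (simp add: unit_cube_def)
qed

lemma face_hull_aux:
  fixes J :: "'n::finite set"
  shows "card (UNIV - J) = m \<Longrightarrow> a \<in> bin_cube \<Longrightarrow> face J a \<subseteq> convex hull (bin_cube \<inter> face J a)"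
proof (induction m arbitrary: J a)
  case 0
  then have J: "J = UNIV" by auto
  show ?case
  proof
    fix x assume x: "x \<in> face J a"
    then have "x = a" using J by (auto simp: face_def vec_eq_iff)
    moreover have "a \<in> face J a" using 0(2) bin_unit by (auto simp: face_def)
    ultimately show "x \<in> convex hull (bin_cube \<inter> face J a)" using 0(2) hull_subset by fastforce
  qed
next
  case (Suc m)
  then obtain i where i: "i \<notin> J" by (metis Diff_UNIV card.empty nat.distinct(1) subsetI subset_antisym Diff_iff)
  have c: "card (UNIV - insert i J) = m"
  proof -
    have "UNIV - insert i J = (UNIV - J) - {i}" by auto
    then show ?thesis using Suc(2) i by (simp add: card_Diff_singleton)
  qed
  show ?case
  proof
    fix x assume x: "x \<in> face J a"
    let ?C = "convex hull (bin_cube \<inter> face J a)"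
    have sub: "v = 0 \<or> v = 1 \<Longrightarrow> face (insert i J) (upd a i v) \<subseteq> ?C" for v
    proof -
      assume v: "v = 0 \<or> v = 1"
      have "face (insert i J) (upd a i v) \<subseteq> convex hull (bin_cube \<inter> face (insert i J) (upd a i v))"
        using Suc.IH[OF c upd_bin[OF Suc(3) v]] .
      also have "\<dots> \<subseteq> ?C"
        by (rule hull_mono) (use i in \<open>auto simp: face_def\<close>)
      finally show ?thesis .
    qed
    have x0: "upd x i 0 \<in> face (insert i J) (upd a i 0)" using x i
      by (auto simp: face_def unit_cube_def)
    have x1: "upd x i 1 \<in> face (insert i J) (upd a i 1)" using x i
      by (auto simp: face_def unit_cube_def)
    have r: "x $ i \<ge> 0" "x $ i \<le> 1" using x by (auto simp: face_def unit_cube_def)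
    have "(1 - x $ i) *\<^sub>R upd x i 0 + (x $ i) *\<^sub>R upd x i 1 \<in> ?C"
      by (rule convexD[OF convex_convex_hull]) (use sub x0 x1 r in auto)
    moreover have "(1 - x $ i) *\<^sub>R upd x i 0 + (x $ i) *\<^sub>R upd x i 1 = x"
      by (simp add: vec_eq_iff algebra_simps)
    ultimately show "x \<in> ?C" by simp
  qed
qed

lemma face_hull: "a \<in> bin_cube \<Longrightarrow> face J (a::real^'n::finite) \<subseteq> convex hull (bin_cube \<inter> face J a)"
  using face_hull_aux by blast


lemma hull_face_pull:
  fixes U :: "(real^'n::finite) set"
  assumes U: "U \<subseteq> unit_cube" and a: "a \<in> bin_cube" and x: "x \<in> convex hull U" and xf: "x \<in> face J a"
  shows "x \<in> convex hull (U \<inter> face J a)"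
proof -
  define h where "h j t = (if a $ j = 0 then t else 1 - t)" for j and t :: real
  obtain s u where s: "finite s" "s \<subseteq> U" "\<forall>v\<in>s. 0 \<le> u v" "sum u s = 1"
    and xs: "(\<Sum>v\<in>s. u v *\<^sub>R v) = x"
    using x unfolding convex_hull_explicit by blast
  have hx: "h j (x $ j) = (\<Sum>v\<in>s. u v * h j (v $ j))" for j
  proof -
    have xj: "x $ j = (\<Sum>v\<in>s. u v * v $ j)" using xs[symmetric] by (simp add: sum_component)
    show ?thesis
    proof (cases "a $ j = 0")
      case True then show ?thesis by (simp add: h_def xj)
    next
      case False
      have "h j (x $ j) = (\<Sum>v\<in>s. u v) - (\<Sum>v\<in>s. u v * v $ j)" using False s(4) by (simp add: h_def xj)
      also have "\<dots> = (\<Sum>v\<in>s. u v * (1 - v $ j))" by (simp add: sum_subtractf right_diff_distrib)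
      finally show ?thesis using False by (simp add: h_def)
    qed
  qed
  have hnn: "v \<in> unit_cube \<Longrightarrow> 0 \<le> h j (v $ j)" for v j
    by (auto simp: h_def unit_cube_def)
  have hz: "v \<in> unit_cube \<Longrightarrow> h j (v $ j) = 0 \<Longrightarrow> v $ j = a $ j" for v j
  proof -
    assume "v \<in> unit_cube" "h j (v $ j) = 0"
    moreover have "a $ j = 0 \<or> a $ j = 1" using a by (simp add: bin_cube_def)
    ultimately show "v $ j = a $ j" by (auto simp: h_def)
  qed
  have "h j (x $ j) = 0" if "j \<in> J" for j
  proof -
    have "x $ j = a $ j" using xf that by (simp add: face_def)
    moreover have "a $ j = 0 \<or> a $ j = 1" using a by (simp add: bin_cube_def)
    ultimately show ?thesis by (auto simp: h_def)
  qed
  then have "0 = (\<Sum>j\<in>J. h j (x $ j))" by simp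
  also have "\<dots> = (\<Sum>j\<in>J. \<Sum>v\<in>s. u v * h j (v $ j))" by (rule sum.cong[OF refl hx])
  also have "\<dots> = (\<Sum>v\<in>s. \<Sum>j\<in>J. u v * h j (v $ j))" by (rule sum.swap)
  also have "\<dots> = (\<Sum>v\<in>s. u v * (\<Sum>j\<in>J. h j (v $ j)))" by (simp add: sum_distrib_left)
  finally have "(\<Sum>v\<in>s. u v * (\<Sum>j\<in>J. h j (v $ j))) = 0" by (rule sym)
  moreover have "\<forall>v\<in>s. 0 \<le> u v * (\<Sum>j\<in>J. h j (v $ j))"
  proof
    fix v assume v: "v \<in> s"
    then have "v \<in> unit_cube" using s(2) U by blast
    then have "0 \<le> (\<Sum>j\<in>J. h j (v $ j))" using hnn by (simp add: sum_nonneg)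
    then show "0 \<le> u v * (\<Sum>j\<in>J. h j (v $ j))" using s(3) v by simp
  qed
  ultimately have z: "\<forall>v\<in>s. u v * (\<Sum>j\<in>J. h j (v $ j)) = 0"
    using sum_nonneg_eq_0_iff[OF s(1), of "\<lambda>v. u v * (\<Sum>j\<in>J. h j (v $ j))"] by simp
  define s' where "s' = {v\<in>s. u v \<noteq> 0}"
  have s'f: "s' \<subseteq> U \<inter> face J a"
  proof
    fix v assume v: "v \<in> s'"
    then have vU: "v \<in> U" "v \<in> unit_cube" using s U by (auto simp: s'_def)
    have "(\<Sum>j\<in>J. h j (v $ j)) = 0" using z v by (auto simp: s'_def)
    moreover have "(\<Sum>j\<in>J. h j (v $ j)) = 0 \<longleftrightarrow> (\<forall>j\<in>J. h j (v $ j) = 0)"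
      by (rule sum_nonneg_eq_0_iff) (simp_all add: hnn[OF vU(2)])
    ultimately have "\<forall>j\<in>J. h j (v $ j) = 0" by blast
    then have "\<forall>j\<in>J. v $ j = a $ j" using hz[OF vU(2)] by blast
    then show "v \<in> U \<inter> face J a" using vU by (simp add: face_def)
  qed
  have fin: "finite s'" using s(1) by (simp add: s'_def)
  have s's: "s' \<subseteq> s" by (auto simp: s'_def)
  have "sum u s = sum u s'" by (rule sum.mono_neutral_right[OF s(1) s's]) (auto simp: s'_def)
  then have e1: "sum u s' = 1" using s(4) by simp
  have "(\<Sum>v\<in>s. u v *\<^sub>R v) = (\<Sum>v\<in>s'. u v *\<^sub>R v)"
    by (rule sum.mono_neutral_right[OF s(1) s's]) (auto simp: s'_def)
  then have e2: "(\<Sum>v\<in>s'. u v *\<^sub>R v) = x" using xs by simp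
  have "(\<Sum>v\<in>s'. u v *\<^sub>R v) \<in> convex hull (U \<inter> face J a)"
  proof (rule convex_sum[OF fin convex_convex_hull e1])
    fix i assume "i \<in> s'" then show "0 \<le> u i" using s(3) by (auto simp: s'_def)
  next
    fix i assume "i \<in> s'" then show "i \<in> convex hull (U \<inter> face J a)" using s'f hull_subset[of "U \<inter> face J a" convex] by blast
  qed
  then show ?thesis using e2 by simp
qed


lemma rf_set_simps:
  "rf_set (RVar i) = bin_cube \<inter> {y. y $ i = 1}"
  "rf_set (RNeg i) = bin_cube \<inter> {y. y $ i = 0}"
  "rf_set (RAnd a b) = rf_set a \<inter> rf_set b"
  "rf_set (ROr a b) = rf_set a \<union> rf_set b"
  by (auto simp: rf_set_def bin_cube_def)

lemma two_pts:
  assumes A: "A \<subseteq> {p,q}" and B: "B \<subseteq> {p,q}"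
  shows "convex hull A \<inter> convex hull B \<subseteq> convex hull (A \<inter> B)"
proof (cases "A \<subseteq> B \<or> B \<subseteq> A")
  case True
  then show ?thesis by (metis Int_absorb1 Int_absorb2 inf.cobounded1 inf.cobounded2 hull_mono)
next
  case False
  then obtain \<alpha> \<beta> where ab: "\<alpha> \<in> A" "\<alpha> \<notin> B" "\<beta> \<in> B" "\<beta> \<notin> A" by blast
  then have "A = {\<alpha>}" "B = {\<beta>}" "\<alpha> \<noteq> \<beta>" using A B by auto
  then show ?thesis by simp
qed

lemma lit_lemma:
  assumes a: "a \<in> bin_cube" and x: "x \<in> face J a" and xi: "x $ i = v" and v: "v = 0 \<or> v = 1"
  shows "x \<in> convex hull (bin_cube \<inter> face J a \<inter> {y. y $ i = v})"
proof -
  have "x \<in> face (insert i J) (upd a i v)" using x xi by (auto simp: face_def)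
  then have "x \<in> convex hull (bin_cube \<inter> face (insert i J) (upd a i v))"
    using face_hull[OF upd_bin[OF a v]] by blast
  moreover have "bin_cube \<inter> face (insert i J) (upd a i v) \<subseteq> bin_cube \<inter> face J a \<inter> {y. y $ i = v}"
    using x xi by (auto simp: face_def)
  ultimately show ?thesis using hull_mono by blast
qed

lemma small_face:
  fixes J :: "'n::finite set"
  assumes c: "card (UNIV - J) \<le> 1" and a: "a \<in> bin_cube" and P: "convex P" "P \<subseteq> unit_cube"
  shows "rf_apply \<psi> P \<inter> face J a \<subseteq> convex hull (rf_set \<psi> \<inter> face J a)"
proof -
  obtain k where k: "\<forall>j. j \<notin> J \<longrightarrow> j = k"
  proof (cases "J = UNIV")
    case True then show ?thesis using that by blast
  next
    case False
    then obtain k where "k \<notin> J" by blast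
    moreover have "\<forall>j\<in>UNIV - J. \<forall>j'\<in>UNIV - J. j = j'" using c card_le_Suc0_iff_eq[of "UNIV - J"] by simp
    ultimately show ?thesis using that by blast
  qed
  have two: "bin_cube \<inter> face J a \<subseteq> {upd a k 0, upd a k 1}"
  proof
    fix y assume y: "y \<in> bin_cube \<inter> face J a"
    then have "y $ k = 0 \<or> y $ k = 1" by (auto simp: bin_cube_def)
    moreover have "j \<noteq> k \<Longrightarrow> y $ j = a $ j" for j using y k by (auto simp: face_def)
    ultimately show "y \<in> {upd a k 0, upd a k 1}" by (auto simp: vec_eq_iff)
  qed
  have sub: "rf_set \<psi> \<inter> face J a \<subseteq> {upd a k 0, upd a k 1}" for \<psi>
    using two by (auto simp: rf_set_def)
  show ?thesis
  proof (induction \<psi>)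
    case (RVar i)
    show ?case using lit_lemma[OF a, of _ J i 1] by (auto simp: rf_set_simps Int_ac)
  next
    case (RNeg i)
    show ?case using lit_lemma[OF a, of _ J i 0] by (auto simp: rf_set_simps Int_ac)
  next
    case (RAnd x y)
    have "rf_apply (RAnd x y) P \<inter> face J a \<subseteq> convex hull (rf_set x \<inter> face J a) \<inter> convex hull (rf_set y \<inter> face J a)"
      using RAnd by auto
    also have "\<dots> \<subseteq> convex hull ((rf_set x \<inter> face J a) \<inter> (rf_set y \<inter> face J a))"
      by (rule two_pts[OF sub sub])
    finally show ?case by (simp add: rf_set_simps Int_ac)
  next
    case (ROr x y)
    let ?U = "rf_apply x P \<union> rf_apply y P"
    have U: "?U \<subseteq> unit_cube" using apply_sub[OF P(1)] P(2) by blast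
    have "rf_apply (ROr x y) P \<inter> face J a \<subseteq> convex hull (?U \<inter> face J a)"
      using hull_face_pull[OF U a] by auto
    also have "\<dots> \<subseteq> convex hull (rf_set (ROr x y) \<inter> face J a)"
    proof (rule hull_minimal)
      show "convex (convex hull (rf_set (ROr x y) \<inter> face J a))" by (rule convex_convex_hull)
    next
      have "rf_apply x P \<inter> face J a \<subseteq> convex hull (rf_set (ROr x y) \<inter> face J a)"
        using ROr(1) hull_mono[of "rf_set x \<inter> face J a" "rf_set (ROr x y) \<inter> face J a"]
        by (auto simp: rf_set_simps)
      moreover have "rf_apply y P \<inter> face J a \<subseteq> convex hull (rf_set (ROr x y) \<inter> face J a)"
        using ROr(2) hull_mono[of "rf_set y \<inter> face J a" "rf_set (ROr x y) \<inter> face J a"]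
        by (auto simp: rf_set_simps)
      ultimately show "?U \<inter> face J a \<subseteq> convex hull (rf_set (ROr x y) \<inter> face J a)" by blast
    qed
    finally show ?case .
  qed
qed


fun isT :: "'n set \<Rightarrow> real^'n \<Rightarrow> 'n rformula \<Rightarrow> bool"
and isF :: "'n set \<Rightarrow> real^'n \<Rightarrow> 'n rformula \<Rightarrow> bool" where
  "isT J a (RVar i) = (i \<in> J \<and> a $ i = 1)"
| "isT J a (RNeg i) = (i \<in> J \<and> a $ i \<noteq> 1)"
| "isT J a (RAnd x y) = (isT J a x \<and> isT J a y)"
| "isT J a (ROr x y) = (isT J a x \<or> isT J a y)"
| "isF J a (RVar i) = (i \<in> J \<and> a $ i \<noteq> 1)"
| "isF J a (RNeg i) = (i \<in> J \<and> a $ i = 1)"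
| "isF J a (RAnd x y) = (isF J a x \<or> isF J a y)"
| "isF J a (ROr x y) = (isF J a x \<and> isF J a y)"

lemma isTF_eval: "\<forall>j\<in>J. y $ j = a $ j \<Longrightarrow> (isT J a \<psi> \<longrightarrow> rf_eval \<psi> y) \<and> (isF J a \<psi> \<longrightarrow> \<not> rf_eval \<psi> y)"
  by (induction \<psi>) auto

lemma main_step:
  fixes J :: "'n::finite set"
  assumes a: "a \<in> bin_cube" and P: "convex P" "P \<subseteq> unit_cube"
    and H: "\<And>i v. i \<notin> J \<Longrightarrow> v = 0 \<or> v = 1 \<Longrightarrow> {x \<in> P \<inter> face J a. x $ i = v} \<subseteq> convex hull (rf_set \<phi> \<inter> face J a)"
  shows "rf_apply \<phi> P \<inter> face J a \<subseteq> convex hull (rf_set \<phi> \<inter> face J a)"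
proof -
  let ?C = "convex hull (rf_set \<phi> \<inter> face J a)"
  let ?F = "face J a"
  have inv: "(isF J a \<psi> \<longrightarrow> rf_apply \<psi> P \<inter> ?F = {}) \<and>
             (\<not> isT J a \<psi> \<and> \<not> isF J a \<psi> \<longrightarrow> rf_apply \<psi> P \<inter> ?F \<subseteq> ?C)" for \<psi>
  proof (induction \<psi>)
    case (RVar i)
    show ?case using H[of i 1] by (auto simp: face_def)
  next
    case (RNeg i)
    have "a $ i = 0 \<or> a $ i = 1" using a by (auto simp: bin_cube_def)
    then show ?case using H[of i 0] by (auto simp: face_def)
  next
    case (RAnd x y)
    then show ?case by auto
  next
    case (ROr x y)
    let ?U = "rf_apply x P \<union> rf_apply y P"
    have U: "?U \<subseteq> unit_cube" using apply_sub[OF P(1)] P(2) by blast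
    have pull: "rf_apply (ROr x y) P \<inter> ?F \<subseteq> convex hull (?U \<inter> ?F)"
      using hull_face_pull[OF U a] by auto
    show ?case
    proof (intro conjI impI)
      assume "isF J a (ROr x y)"
      then have "?U \<inter> ?F = {}" using ROr by auto
      then show "rf_apply (ROr x y) P \<inter> ?F = {}" using pull by auto
    next
      assume "\<not> isT J a (ROr x y) \<and> \<not> isF J a (ROr x y)"
      then have "?U \<inter> ?F \<subseteq> ?C" using ROr by auto
      then have "convex hull (?U \<inter> ?F) \<subseteq> ?C" by (simp add: hull_minimal)
      then show "rf_apply (ROr x y) P \<inter> ?F \<subseteq> ?C" using pull by auto
    qed
  qed
  consider "isF J a \<phi>" | "isT J a \<phi>" | "\<not> isT J a \<phi> \<and> \<not> isF J a \<phi>" by blast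
  then show ?thesis
  proof cases
    case 1 then show ?thesis using inv by auto
  next
    case 3 then show ?thesis using inv by auto
  next
    case 2
    have "bin_cube \<inter> ?F \<subseteq> rf_set \<phi> \<inter> ?F"
      using isTF_eval[of J _ a \<phi>] 2 by (auto simp: rf_set_def face_def)
    then have "?F \<subseteq> ?C" using face_hull[OF a, of J] hull_mono by blast
    then show ?thesis by auto
  qed
qed


lemma iter_claim:
  fixes \<phi> :: "'n::finite rformula" and Q :: "(real ^ 'n) set"
  assumes "convex Q" and "Q \<subseteq> unit_cube" and "rf_set \<phi> \<subseteq> Q" and l: "l \<ge> 1"
  shows "\<forall>(J::'n set) (a::real^'n). a \<in> bin_cube \<longrightarrow> card (UNIV - J) \<le> l \<longrightarrow>
           rf_iter \<phi> l Q \<inter> face J a \<subseteq> convex hull (rf_set \<phi> \<inter> face J a)"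
  using l
proof (induction l rule: dec_induct)
  case base
  show ?case
  proof (intro allI impI)
    fix J :: "'n set" and a :: "real^'n" assume "a \<in> bin_cube" "card (UNIV - J) \<le> 1"
    then show "rf_iter \<phi> 1 Q \<inter> face J a \<subseteq> convex hull (rf_set \<phi> \<inter> face J a)"
      using small_face[of J a Q \<phi>] assms by (simp add: rf_iter_def)
  qed
next
  case (step l)
  let ?P = "rf_iter \<phi> l Q"
  have e: "rf_iter \<phi> (Suc l) Q = rf_apply \<phi> ?P" by (simp add: rf_iter_def)
  have P: "convex ?P" "?P \<subseteq> unit_cube" using iter_props[OF assms(1-3)] by auto
  show ?case
  proof (intro allI impI)
    fix J :: "'n set" and a :: "real^'n" assume a: "a \<in> bin_cube" and c: "card (UNIV - J) \<le> Suc l"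
    show "rf_iter \<phi> (Suc l) Q \<inter> face J a \<subseteq> convex hull (rf_set \<phi> \<inter> face J a)"
      unfolding e
    proof (rule main_step[OF a P])
      fix i v assume i: "i \<notin> J" and v: "v = 0 \<or> v = (1::real)"
      have "UNIV - insert i J = (UNIV - J) - {i}" by auto
      then have c': "card (UNIV - insert i J) \<le> l" using c i by (simp add: card_Diff_singleton)
      have "{x \<in> ?P \<inter> face J a. x $ i = v} \<subseteq> ?P \<inter> face (insert i J) (upd a i v)"
        by (auto simp: face_def)
      also have "\<dots> \<subseteq> convex hull (rf_set \<phi> \<inter> face (insert i J) (upd a i v))"
        using step.IH upd_bin[OF a v] c' by blast
      also have "\<dots> \<subseteq> convex hull (rf_set \<phi> \<inter> face J a)"
        by (rule hull_mono) (use i in \<open>auto simp: face_def\<close>)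
      finally show "{x \<in> ?P \<inter> face J a. x $ i = v} \<subseteq> convex hull (rf_set \<phi> \<inter> face J a)" .
    qed
  qed
qed

theorem corollary4p5:
  fixes \<phi> :: "'n::finite rformula" and Q :: "(real ^ 'n) set"
  assumes "convex Q" and "Q \<subseteq> unit_cube" and "rf_set \<phi> \<subseteq> Q"
  shows "rf_iter \<phi> CARD('n) Q = convex hull (rf_set \<phi>)"
proof
  have props: "convex (rf_iter \<phi> CARD('n) Q)" "rf_iter \<phi> CARD('n) Q \<subseteq> unit_cube"
    "rf_set \<phi> \<subseteq> rf_iter \<phi> CARD('n) Q" using iter_props[OF assms] by auto
  then show "convex hull (rf_set \<phi>) \<subseteq> rf_iter \<phi> CARD('n) Q" by (simp add: hull_minimal)
  have "(0::real^'n) \<in> bin_cube" by (simp add: bin_cube_def)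
  moreover have "CARD('n) \<ge> 1" by (simp add: Suc_leI)
  ultimately have "rf_iter \<phi> CARD('n) Q \<inter> face ({}::'n set) 0 \<subseteq> convex hull (rf_set \<phi> \<inter> face ({}::'n set) 0)"
    using iter_claim[OF assms, of "CARD('n)"] by simp
  moreover have "face ({}::'n set) (0::real^'n) = unit_cube" by (simp add: face_def)
  moreover have "rf_set \<phi> \<subseteq> unit_cube" using assms(2,3) by blast
  ultimately show "rf_iter \<phi> CARD('n) Q \<subseteq> convex hull (rf_set \<phi>)" using props(2)
    by (metis Int_absorb2)
qed

end
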